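(* Let $G$ and $H$ be two vertex-disjoint graphs, considered as starting positions of the Maker-Breaker domination game, and let $G\bowtie H$ denote their join (the union of $G$ and $H$ together with all edges $uv$ with $u\in V(G)$, $v\in V(H)$). (i) If $G=K_1$ and $o(H)=\mathcal S$ (or $H=K_1$ and $o(G)=\mathcal S$), then $o(G\bowtie H)=\mathcal N$. (ii) Otherwise, $o(G\bowtie H)=\mathcal D$.
   Context: The Maker-Breaker domination game on a graph: Dominator and Staller alternately choose a not-yet-chosen vertex (no passing), starting with all vertices unchosen; when all vertices are chosen, Dominator wins if his vertices form a dominating set of the graph, otherwise Staller wins. The outcome $o(\cdot)$ is $\mathcal D$ if Dominator has a winning strategy both as first and as second player, $\mathcal S$ if Staller has a winning strategy both as first and as second player, and $\mathcal N$ if the first player has a winning strategy; every graph has one of these three outcomes. $K_1$ is the graph with a single vertex. *)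

theory Defs
  imports Main
begin

definition graph :: "'a set \<Rightarrow> ('a \<Rightarrow> 'a \<Rightarrow> bool) \<Rightarrow> bool" where
  "graph V E \<longleftrightarrow> finite V \<and> (\<forall>u v. E u v \<longrightarrow> u \<in> V \<and> v \<in> V)
     \<and> (\<forall>u v. E u v \<longrightarrow> E v u) \<and> (\<forall>v. \<not> E v v)"

definition dominating :: "'a set \<Rightarrow> ('a \<Rightarrow> 'a \<Rightarrow> bool) \<Rightarrow> 'a set \<Rightarrow> bool" where
  "dominating V E D \<longleftrightarrow> D \<subseteq> V \<and> (\<forall>v\<in>V. v \<in> D \<or> (\<exists>u\<in>D. E u v))"

text \<open>dom_wins V E D S b: in the position where Dominator has chosen D and
Staller has chosen S, with Dominator to move iff b, Dominator has a winning
strategy in the Maker-Breaker domination game (no passing).\<close>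
inductive dom_wins :: "'a set \<Rightarrow> ('a \<Rightarrow> 'a \<Rightarrow> bool) \<Rightarrow> 'a set \<Rightarrow> 'a set \<Rightarrow> bool \<Rightarrow> bool"
  for V E where
  finished: "V - (D \<union> S) = {} \<Longrightarrow> dominating V E D \<Longrightarrow> dom_wins V E D S b"
| dom_move: "v \<in> V - (D \<union> S) \<Longrightarrow> dom_wins V E (insert v D) S False \<Longrightarrow> dom_wins V E D S True"
| stall_move: "V - (D \<union> S) \<noteq> {} \<Longrightarrow> (\<forall>v\<in>V - (D \<union> S). dom_wins V E D (insert v S) True)
      \<Longrightarrow> dom_wins V E D S False"

definition outcome_D :: "'a set \<Rightarrow> ('a \<Rightarrow> 'a \<Rightarrow> bool) \<Rightarrow> bool" where
  "outcome_D V E \<longleftrightarrow> dom_wins V E {} {} True \<and> dom_wins V E {} {} False"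

definition outcome_S :: "'a set \<Rightarrow> ('a \<Rightarrow> 'a \<Rightarrow> bool) \<Rightarrow> bool" where
  "outcome_S V E \<longleftrightarrow> \<not> dom_wins V E {} {} True \<and> \<not> dom_wins V E {} {} False"

definition outcome_N :: "'a set \<Rightarrow> ('a \<Rightarrow> 'a \<Rightarrow> bool) \<Rightarrow> bool" where
  "outcome_N V E \<longleftrightarrow> dom_wins V E {} {} True \<and> \<not> dom_wins V E {} {} False"

definition join_edges :: "'a set \<Rightarrow> ('a \<Rightarrow> 'a \<Rightarrow> bool) \<Rightarrow> 'a set \<Rightarrow> ('a \<Rightarrow> 'a \<Rightarrow> bool)
    \<Rightarrow> 'a \<Rightarrow> 'a \<Rightarrow> bool" where
  "join_edges V1 E1 V2 E2 u v \<longleftrightarrow> E1 u v \<or> E2 u v \<or> (u \<in> V1 \<and> v \<in> V2) \<or> (u \<in> V2 \<and> v \<in> V1)"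

end

theory Submission
  imports Defs
begin

lemma strat:
  assumes fin: "finite V"
  and fc: "\<And>D S b. P D S b \<Longrightarrow> V - (D\<union>S) = {} \<Longrightarrow> dominating V E D"
  and dm: "\<And>D S. P D S True \<Longrightarrow> V-(D\<union>S) \<noteq> {} \<Longrightarrow> \<exists>v\<in>V-(D\<union>S). P (insert v D) S False"
  and sm: "\<And>D S v. P D S False \<Longrightarrow> v \<in> V-(D\<union>S) \<Longrightarrow> P D (insert v S) True"
  and "P D S b"
  shows "dom_wins V E D S b"
proof -
have "card (V-(D\<union>S)) = n \<Longrightarrow> P D S b \<Longrightarrow> dom_wins V E D S b" for n
proof (induction n arbitrary: D S b)
  case 0
  then have "V-(D\<union>S) = {}" using fin by simp
  then show ?case using fc 0 by (simp add: dom_wins.finished)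
next
  case (Suc n)
  have ne: "V-(D\<union>S) \<noteq> {}" using Suc.prems(1) by (metis card.empty Zero_not_Suc)
  show ?case
  proof (cases b)
    case True
    then obtain v where v: "v\<in>V-(D\<union>S)" "P (insert v D) S False" using dm[of D S] Suc.prems(2) ne True by auto
    have "V - (insert v D \<union> S) = (V-(D\<union>S)) - {v}" by auto
    then have "card (V - (insert v D \<union> S)) = n" using v Suc.prems fin by simp
    then have "dom_wins V E (insert v D) S False" using Suc.IH v by blast
    then show ?thesis using True v by (simp add: dom_wins.dom_move)
  next
    case False
    have "\<forall>v\<in>V-(D\<union>S). dom_wins V E D (insert v S) True"
    proof
      fix v assume v: "v\<in>V-(D\<union>S)"
      have "V - (D \<union> insert v S) = (V-(D\<union>S)) - {v}" by auto
      then have "card (V - (D \<union> insert v S)) = n" using v Suc.prems fin by simp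
      then show "dom_wins V E D (insert v S) True" using Suc.IH[of D "insert v S" True] sm[of D S v] v Suc.prems(2) False by simp
    qed
    then show ?thesis using False ne by (simp add: dom_wins.stall_move)
  qed
qed
then show ?thesis using assms(5) by blast
qed


lemma fin_dom: "dom_wins V E D S b \<Longrightarrow> V-(D\<union>S) = {} \<Longrightarrow> dominating V E D"
  by (erule dom_wins.cases) auto

lemma dominating_ins: "dominating V E D \<Longrightarrow> v \<in> V \<Longrightarrow> dominating V E (insert v D)"
  unfolding dominating_def by auto

lemma mono_aux: "dom_wins V E D S b \<Longrightarrow>
   (\<forall>v\<in>V-(D\<union>S). dom_wins V E (insert v D) S b) \<and> (\<not>b \<longrightarrow> dom_wins V E D S True)"
proof (induction rule: dom_wins.induct)
  case (finished D S b)
  then show ?case by (auto intro: dom_wins.finished)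
next
  case (dom_move w D S)
  have "dom_wins V E (insert v D) S True" if v: "v\<in>V-(D\<union>S)" for v
  proof (cases "v = w")
    case True then show ?thesis using dom_move.IH by simp
  next
    case False
    have "dom_wins V E (insert w (insert v D)) S False"
      using dom_move.IH v False by (simp add: insert_commute)
    then show ?thesis using dom_move.hyps(1) False by (intro dom_wins.dom_move[of w]) auto
  qed
  then show ?case by simp
next
  case (stall_move D S)
  have A: "dom_wins V E (insert v D) S False" if v: "v\<in>V-(D\<union>S)" for v
  proof (cases "V - (insert v D \<union> S) = {}")
    case True
    then have "V - (D \<union> insert v S) = {}" by auto
    moreover have "dom_wins V E D (insert v S) True" using stall_move.IH v by (meson conjunct1)
    ultimately have "dominating V E D" using fin_dom by blast
    moreover have "v \<in> V" using v by simp
    ultimately have "dominating V E (insert v D)" using dominating_ins by metis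
    then show ?thesis by (rule dom_wins.finished[OF True])
  next
    case False
    have "\<forall>u\<in>V - (insert v D \<union> S). dom_wins V E (insert v D) (insert u S) True"
    proof
      fix u assume u: "u\<in>V - (insert v D \<union> S)"
      have I: "\<forall>w\<in>V - (D \<union> insert u S). dom_wins V E (insert w D) (insert u S) True"
        using stall_move.IH u by simp
      have "v \<in> V - (D \<union> insert u S)" using u v by auto
      then show "dom_wins V E (insert v D) (insert u S) True"
        using I by blast
    qed
    then show ?thesis using False by (simp add: dom_wins.stall_move)
  qed
  moreover obtain u where "u \<in> V-(D\<union>S)" using stall_move.hyps(1) by blast
  ultimately have "dom_wins V E D S True" by (meson dom_wins.dom_move)
  then show ?case using A by simp
qed

lemma mono_first: "dom_wins V E D S False \<Longrightarrow> dom_wins V E D S True"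
  using mono_aux by blast


lemma card2_other: "card X \<ge> 2 \<Longrightarrow> X - {v} \<noteq> {}"
proof
  assume "card X \<ge> 2" "X - {v} = {}"
  then have "X \<subseteq> {v}" by auto
  then have "card X \<le> 1" using card_mono[of "{v}" X] by simp
  then show False using \<open>card X \<ge> 2\<close> by simp
qed

lemma join_E2:
  assumes "graph V1 E1" "V1 \<inter> V2 = {}" "u \<in> V2" "v \<in> V2" "join_edges V1 E1 V2 E2 u v"
  shows "E2 u v"
  using assms unfolding graph_def join_edges_def by blast

lemma both_sides:
  assumes g1: "graph V1 E1" and g2: "graph V2 E2" and disj: "V1 \<inter> V2 = {}"
    and c1: "card V1 \<ge> 2" and c2: "card V2 \<ge> 2"
  shows "dom_wins (V1 \<union> V2) (join_edges V1 E1 V2 E2) {} {} b"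
proof -
  define V where "V = V1 \<union> V2"
  define ok where "ok D S X = (D \<inter> X \<noteq> {} \<or> S \<inter> X = {})" for D S :: "'a set" and X
  define thr where "thr D S X = (D \<inter> X = {} \<and> S \<inter> X \<noteq> {} \<and> X - (D \<union> S) \<noteq> {})"
    for D S :: "'a set" and X
  define P where "P D S b = (D \<subseteq> V \<and> (if b then (ok D S V1 \<or> thr D S V1) \<and> (ok D S V2 \<or> thr D S V2)
       \<and> (ok D S V1 \<or> ok D S V2) else ok D S V1 \<and> ok D S V2))" for D S b
  have ne1: "V1 \<noteq> {}" using c1 by auto
  have ne2: "V2 \<noteq> {}" using c2 by auto
  have fin: "finite V" using g1 g2 unfolding V_def graph_def by auto
  have meet: "D \<inter> X \<noteq> {}" if "P D S b" "V - (D \<union> S) = {}" "X = V1 \<or> X = V2" for D S b X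
  proof
    assume a: "D \<inter> X = {}"
    have XV: "X \<subseteq> V" "X \<noteq> {}" using that(3) ne1 ne2 unfolding V_def by auto
    have "ok D S X \<or> thr D S X" using that(1,3) unfolding P_def by (cases b) auto
    then show False
    proof
      assume "ok D S X"
      then have "S \<inter> X = {}" using a unfolding ok_def by auto
      then show False using XV a that(2) by auto
    next
      assume "thr D S X" then show False using XV that(2) unfolding thr_def by auto
    qed
  qed
  have fc: "dominating V (join_edges V1 E1 V2 E2) D"
    if "P D S b" "V - (D \<union> S) = {}" for D S b
  proof -
    have "D \<inter> V1 \<noteq> {}" "D \<inter> V2 \<noteq> {}" using meet[OF that] by auto
    moreover have "D \<subseteq> V" using that(1) unfolding P_def by simp
    ultimately show ?thesis unfolding dominating_def V_def join_edges_def by blast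
  qed
  have dm: "\<exists>v\<in>V-(D\<union>S). P (insert v D) S False"
    if PT: "P D S True" and fr: "V-(D\<union>S) \<noteq> {}" for D S
  proof -
    have DV: "D \<subseteq> V" using PT unfolding P_def by simp
    have okins: "ok (insert v D) S X" if "ok D S X" for v X using that unfolding ok_def by auto
    have okv: "ok (insert v D) S X" if "v \<in> X" for v X using that unfolding ok_def by auto
    show ?thesis
    proof (cases "thr D S V1")
      case True
      then obtain v where v: "v \<in> V1 - (D \<union> S)" unfolding thr_def by auto
      have "\<not> ok D S V1" using True unfolding ok_def thr_def by auto
      then have "ok D S V2" using PT unfolding P_def by simp
      then have "P (insert v D) S False" using okins okv v DV unfolding P_def V_def by auto
      then show ?thesis using v unfolding V_def by blast
    next
      case F1: False
      show ?thesis
      proof (cases "thr D S V2")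
        case True
        then obtain v where v: "v \<in> V2 - (D \<union> S)" unfolding thr_def by auto
        have "\<not> ok D S V2" using True unfolding ok_def thr_def by auto
        then have "ok D S V1" using PT unfolding P_def by simp
        then have "P (insert v D) S False" using okins okv v DV unfolding P_def V_def by auto
        then show ?thesis using v unfolding V_def by blast
      next
        case False
        then have "ok D S V1" "ok D S V2" using F1 PT unfolding P_def by auto
        moreover obtain v where v: "v \<in> V-(D\<union>S)" using fr by blast
        ultimately have "P (insert v D) S False" using okins DV unfolding P_def by auto
        then show ?thesis using v by blast
      qed
    qed
  qed
  have sm: "P D (insert v S) True" if "P D S False" "v \<in> V-(D\<union>S)" for D S v
  proof -
    have DV: "D \<subseteq> V" and o1: "ok D S V1" and o2: "ok D S V2" using that(1) unfolding P_def by auto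
    have step: "ok D (insert v S) X \<or> thr D (insert v S) X" if okX: "ok D S X" and cX: "card X \<ge> 2" for X
    proof (cases "D \<inter> X \<noteq> {}")
      case True then show ?thesis unfolding ok_def by auto
    next
      case False
      then have S0: "S \<inter> X = {}" using okX unfolding ok_def by auto
      show ?thesis
      proof (cases "v \<in> X")
        case True
        obtain w where "w \<in> X - {v}" using card2_other[OF cX] by blast
        then have "w \<in> X - (D \<union> insert v S)" using False S0 by auto
        then have "thr D (insert v S) X" using False True unfolding thr_def by auto
        then show ?thesis by simp
      next
        case False
        then show ?thesis using S0 unfolding ok_def by auto
      qed
    qed
    have keep: "ok D (insert v S) X" if "ok D S X" "v \<notin> X" for X
      using that unfolding ok_def by auto
    have "v \<notin> V1 \<or> v \<notin> V2" using disj by auto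
    then have "ok D (insert v S) V1 \<or> ok D (insert v S) V2" using keep o1 o2 by auto
    then show ?thesis using step[OF o1 c1] step[OF o2 c2] DV unfolding P_def by simp
  qed
  have "P {} {} b" unfolding P_def ok_def by simp
  then have "dom_wins V (join_edges V1 E1 V2 E2) {} {} b"
  proof (rule strat[where P=P, rotated -1])
    show "finite V" by (rule fin)
    show "dominating V (join_edges V1 E1 V2 E2) D" if "P D S b" "V - (D \<union> S) = {}" for D S b
      using fc that by blast
    show "\<exists>v\<in>V-(D\<union>S). P (insert v D) S False" if "P D S True" "V-(D\<union>S) \<noteq> {}" for D S
      using dm that by blast
    show "P D (insert v S) True" if "P D S False" "v \<in> V-(D\<union>S)" for D S v
      using sm that by blast
  qed
  then show ?thesis unfolding V_def .
qed


lemma k1_triv: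
  assumes g2: "graph V2 E2" and x2: "x \<notin> V2" and xD: "x \<in> D" and DV: "D \<subseteq> insert x V2"
  shows "dom_wins (insert x V2) (join_edges {x} E1 V2 E2) D S b"
proof -
  define V where "V = insert x V2"
  define P where "P D S b = (x \<in> D \<and> D \<subseteq> V)" for D S :: "'a set" and b :: bool
  have fin: "finite V" using g2 unfolding V_def graph_def by auto
  have "dom_wins V (join_edges {x} E1 V2 E2) D S b"
  proof (rule strat[where P=P, rotated -1])
    show "P D S b" using xD DV unfolding P_def V_def by simp
    show "finite V" by (rule fin)
    show "dominating V (join_edges {x} E1 V2 E2) D" if "P D S b" "V - (D \<union> S) = {}" for D S b
      using that unfolding P_def dominating_def V_def join_edges_def by blast
    show "\<exists>v\<in>V-(D\<union>S). P (insert v D) S False" if "P D S True" "V-(D\<union>S) \<noteq> {}" for D S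
      using that unfolding P_def by blast
    show "P D (insert v S) True" if "P D S False" "v \<in> V-(D\<union>S)" for D S v
      using that unfolding P_def by blast
  qed
  then show ?thesis unfolding V_def .
qed

lemma k1_fwd:
  assumes x2: "x \<notin> V2" and ne: "V2 \<noteq> {}"
  shows "dom_wins V2 E2 D S b \<Longrightarrow> dom_wins (insert x V2) (join_edges {x} E1 V2 E2) D (insert x S) b"
proof (induction rule: dom_wins.induct)
  case (finished D S b)
  have fr: "insert x V2 - (D \<union> insert x S) = {}" using finished.hyps(1) by auto
  obtain w where w: "w \<in> V2" using ne by blast
  then obtain u where u: "u \<in> D" using finished.hyps(2) unfolding dominating_def by blast
  have "dominating (insert x V2) (join_edges {x} E1 V2 E2) D"
    using finished.hyps(2) u unfolding dominating_def join_edges_def by blast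
  then show ?case using fr by (rule dom_wins.finished[rotated])
next
  case (dom_move v D S)
  then show ?case using x2 by (intro dom_wins.dom_move[of v]) auto
next
  case (stall_move D S)
  have eq: "insert x V2 - (D \<union> insert x S) = V2 - (D \<union> S)" using x2 by auto
  show ?case
  proof (rule dom_wins.stall_move)
    show "insert x V2 - (D \<union> insert x S) \<noteq> {}" using eq stall_move.hyps(1) by simp
    show "\<forall>v\<in>insert x V2 - (D \<union> insert x S). dom_wins (insert x V2) (join_edges {x} E1 V2 E2) D (insert v (insert x S)) True"
      using stall_move.IH eq by (simp add: insert_commute)
  qed
qed

lemma k1_bwd:
  assumes g1: "graph {x} E1" and x2: "x \<notin> V2"
  shows "dom_wins (insert x V2) (join_edges {x} E1 V2 E2) D S b \<Longrightarrow> x \<in> S \<Longrightarrow> D \<subseteq> V2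
     \<Longrightarrow> dom_wins V2 E2 D (S - {x}) b"
proof (induction rule: dom_wins.induct)
  case (finished D S b)
  have fr: "V2 - (D \<union> (S - {x})) = {}" using finished.hyps(1) x2 by auto
  have "dominating V2 E2 D"
    unfolding dominating_def
  proof (intro conjI ballI)
    show "D \<subseteq> V2" by fact
    fix v assume v: "v \<in> V2"
    then have "v \<in> D \<or> (\<exists>u\<in>D. join_edges {x} E1 V2 E2 u v)"
      using finished.hyps(2) unfolding dominating_def by blast
    moreover have "E2 u v" if "u \<in> D" "join_edges {x} E1 V2 E2 u v" for u
      using join_E2[OF g1 _ _ v that(2)] that(1) finished.prems(2) x2 by blast
    ultimately show "v \<in> D \<or> (\<exists>u\<in>D. E2 u v)" by blast
  qed
  then show ?case using fr by (rule dom_wins.finished[rotated])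
next
  case (dom_move v D S)
  have v: "v \<in> V2 - (D \<union> (S - {x}))" using dom_move.hyps(1) dom_move.prems by auto
  have "dom_wins V2 E2 (insert v D) (S - {x}) False" using dom_move.IH dom_move.prems v by auto
  then show ?case using v by (rule dom_wins.dom_move[rotated])
next
  case (stall_move D S)
  have eq: "insert x V2 - (D \<union> S) = V2 - (D \<union> (S - {x}))" using stall_move.prems x2 by auto
  show ?case
  proof (rule dom_wins.stall_move)
    show "V2 - (D \<union> (S - {x})) \<noteq> {}" using eq stall_move.hyps(1) by simp
    show "\<forall>v\<in>V2 - (D \<union> (S - {x})). dom_wins V2 E2 D (insert v (S - {x})) True"
    proof
      fix v assume v: "v \<in> V2 - (D \<union> (S - {x}))"
      then have "v \<noteq> x" using x2 by auto
      then have "insert v S - {x} = insert v (S - {x})" by auto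
      then show "dom_wins V2 E2 D (insert v (S - {x})) True"
        using stall_move.IH v eq stall_move.prems by (metis insertI2)
    qed
  qed
qed

lemma k1_main:
  assumes g1: "graph {x} E1" and g2: "graph V2 E2" and x2: "x \<notin> V2" and ne: "V2 \<noteq> {}"
  shows "dom_wins (insert x V2) (join_edges {x} E1 V2 E2) {} {} True"
    and "dom_wins V2 E2 {} {} True \<Longrightarrow> dom_wins (insert x V2) (join_edges {x} E1 V2 E2) {} {} False"
    and "outcome_S V2 E2 \<Longrightarrow> \<not> dom_wins (insert x V2) (join_edges {x} E1 V2 E2) {} {} False"
proof -
  let ?V = "insert x V2" and ?J = "join_edges {x} E1 V2 E2"
  have "dom_wins ?V ?J {x} {} False" by (rule k1_triv[OF g2 x2]) auto
  then show "dom_wins ?V ?J {} {} True" by (intro dom_wins.dom_move[of x]) auto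
next
  let ?V = "insert x V2" and ?J = "join_edges {x} E1 V2 E2"
  assume h: "dom_wins V2 E2 {} {} True"
  show "dom_wins ?V ?J {} {} False"
  proof (rule dom_wins.stall_move)
    show "?V - ({} \<union> {}) \<noteq> {}" by simp
    show "\<forall>v\<in>?V - ({} \<union> {}). dom_wins ?V ?J {} (insert v {}) True"
    proof
      fix v assume v: "v \<in> ?V - ({} \<union> {})"
      show "dom_wins ?V ?J {} (insert v {}) True"
      proof (cases "v = x")
        case True
        then show ?thesis using k1_fwd[OF x2 ne h] by simp
      next
        case False
        have "dom_wins ?V ?J {x} {v} False" by (rule k1_triv[OF g2 x2]) auto
        then show ?thesis using False by (intro dom_wins.dom_move[of x]) auto
      qed
    qed
  qed
next
  let ?V = "insert x V2" and ?J = "join_edges {x} E1 V2 E2"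
  assume h: "outcome_S V2 E2"
  show "\<not> dom_wins ?V ?J {} {} False"
  proof
    assume "dom_wins ?V ?J {} {} False"
    then have "dom_wins ?V ?J {} {x} True"
      by (cases rule: dom_wins.cases) auto
    then have "dom_wins V2 E2 {} ({x} - {x}) True" by (rule k1_bwd[OF g1 x2]) auto
    then show False using h unfolding outcome_S_def by simp
  qed
qed


lemma k1_case:
  assumes g1: "graph V1 E1" and g2: "graph V2 E2" and c1: "card V1 = 1"
    and disj: "V1 \<inter> V2 = {}" and ne: "V2 \<noteq> {}"
  shows "(outcome_S V2 E2 \<longrightarrow> outcome_N (V1 \<union> V2) (join_edges V1 E1 V2 E2))
       \<and> (\<not> outcome_S V2 E2 \<longrightarrow> outcome_D (V1 \<union> V2) (join_edges V1 E1 V2 E2))"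
proof -
  obtain x where x: "V1 = {x}" using c1 by (rule card_1_singletonE)
  have g1': "graph {x} E1" using g1 x by simp
  have x2: "x \<notin> V2" using disj x by auto
  have U: "V1 \<union> V2 = insert x V2" using x by auto
  note m = k1_main[OF g1' g2 x2 ne]
  have "\<not> outcome_S V2 E2 \<Longrightarrow> dom_wins V2 E2 {} {} True"
    unfolding outcome_S_def using mono_first by blast
  moreover have U': "{x} \<union> V2 = insert x V2" by simp
  ultimately show ?thesis using m unfolding x U' outcome_N_def outcome_D_def by blast
qed

lemma join_sym: "join_edges V1 E1 V2 E2 = join_edges V2 E2 V1 E1"
  by (auto simp: join_edges_def fun_eq_iff)

theorem theorem5:
  fixes V1 V2 :: "'a set" and E1 E2 :: "'a \<Rightarrow> 'a \<Rightarrow> bool"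
  assumes "graph V1 E1" and "graph V2 E2"
    and "V1 \<noteq> {}" and "V2 \<noteq> {}" and "V1 \<inter> V2 = {}"
  shows "(((card V1 = 1 \<and> outcome_S V2 E2) \<or> (card V2 = 1 \<and> outcome_S V1 E1))
           \<longrightarrow> outcome_N (V1 \<union> V2) (join_edges V1 E1 V2 E2))
       \<and> (\<not> ((card V1 = 1 \<and> outcome_S V2 E2) \<or> (card V2 = 1 \<and> outcome_S V1 E1))
           \<longrightarrow> outcome_D (V1 \<union> V2) (join_edges V1 E1 V2 E2))"
proof -
  have ND: "\<not> (outcome_N V E \<and> outcome_D V E)" for V and E :: "'a \<Rightarrow> 'a \<Rightarrow> bool"
    unfolding outcome_N_def outcome_D_def by blast
  have U: "V2 \<union> V1 = V1 \<union> V2" by blast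
  have d2: "V2 \<inter> V1 = {}" using assms(5) by blast
  note A = k1_case[OF assms(1,2) _ assms(5,4)]
  note B = k1_case[OF assms(2,1) _ d2 assms(3), unfolded U join_sym[of V2]]
  show ?thesis
  proof (cases "card V1 = 1")
    case True
    then show ?thesis using A B ND by metis
  next
    case F1: False
    show ?thesis
    proof (cases "card V2 = 1")
      case True
      then show ?thesis using A B ND F1 by metis
    next
      case False
      have f1: "finite V1" and f2: "finite V2" using assms(1,2) unfolding graph_def by auto
      have "card V1 \<noteq> 0" "card V2 \<noteq> 0" using f1 f2 assms(3,4) by auto
      then have "card V1 \<ge> 2" "card V2 \<ge> 2" using F1 False by auto
      then have "dom_wins (V1 \<union> V2) (join_edges V1 E1 V2 E2) {} {} b" for b
        using both_sides[OF assms(1,2,5)] by blast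
      then show ?thesis using F1 False unfolding outcome_D_def by blast
    qed
  qed
qed

end
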